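(* Let $\mathcal G$ be a connected rank-3 tensor Feynman graph as in the context, with $N_{\rm ext}$ external legs. Let \[ \omega_{\deg}(\mathcal G)=-(V-1)+\tfrac12F_{\rm int}(\mathcal G). \] Then: \begin{itemize} \item if $N_{\rm ext}\ge6$, then $\omega_{\deg}(\mathcal G)\le-N_{\rm ext}/12$; \item if $N_{\rm ext}=4$, then $\omega_{\deg}(\mathcal G)\le0$; \item if $N_{\rm ext}=2$, then $\omega_{\deg}(\mathcal G)\le1$. \end{itemize}
   Context: Bubbles. Use colors $1,2,3$ for bubble edges and color $0$ for propagator lines. The tetrahedral bubble $\mathbf b_+$ is $K_4$ on $w_1,\dots,w_4$ with the following colored edges: \begin{itemize} \item $w_1w_2$ and $w_3w_4$ of color 1; \item $w_1w_3$ and $w_2w_4$ of color 2; \item $w_1w_4$ and $w_2w_3$ of color 3. \end{itemize} For $c\in\{1,2,3\}$, the melonic bubble $\mathbf b_c$ has vertices $w_1,\dots,w_4$ and the following edges: \begin{itemize} \item $w_1w_2$ doubled, carrying the two colors of $\{1,2,3\}\setminus\{c\}$; \item $w_3w_4$ doubled, carrying the two colors of $\{1,2,3\}\setminus\{c\}$; \item single edges $w_2w_3$ and $w_4w_1$ of color $c$. \end{itemize} Graphs. A graph $\mathcal G$ consists of the following data: \begin{itemize} \item $V=V_++V_m$ interaction vertices (copies of $\mathbf b_+$, resp. of some $\mathbf b_c$); \item $L$ internal color-0 lines joining bubble vertices, each bubble vertex incident to at most one line; \item a color-0 external leg at each bubble vertex not incident to a line. \end{itemize} Let $N_{\rm ext}$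 be the number of external legs. The colored extension $\mathcal G_{\rm col}$ is the resulting 4-edge-colored graph. Connected means $\mathcal G_{\rm col}$ is connected. Faces. A face of color $c\in\{1,2,3\}$ is a connected component of the subgraph of $\mathcal G_{\rm col}$ formed by the color-0 edges and half-edges and the color-$c$ edges. It is internal if it is a cycle, and external if it is a path between two external legs. $F_{\rm int}(\mathcal G)$ is the number of internal faces. *)

theory Defs
  imports Complex_Main
begin

text \<open>Bubble vertices w1..w4 are encoded locally as 0..3. A bubble type is a nat:
  0 = tetrahedral bubble b_+, c \<in> {1,2,3} = melonic bubble b_c.
  A graph is given by V (number of bubbles, indexed 0..<V), a typing function bt,
  and a set L of internal color-0 lines (two-element sets of bubble vertices).\<close>

definition colors :: "nat set" where "colors = {1,2,3}"

definition tet_edges :: "nat \<Rightarrow> nat set set" where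
  "tet_edges c = (if c = 1 then {{0,1},{2,3}}
                  else if c = 2 then {{0,2},{1,3}}
                  else if c = 3 then {{0,3},{1,2}} else {})"

definition mel_edges :: "nat \<Rightarrow> nat \<Rightarrow> nat set set" where
  "mel_edges t c = (if c \<notin> colors then {}
                    else if c = t then {{1,2},{3,0}}
                    else {{0,1},{2,3}})"

definition bubble_edges :: "nat \<Rightarrow> nat \<Rightarrow> nat set set" where
  "bubble_edges t c = (if t = 0 then tet_edges c else mel_edges t c)"

definition bverts :: "nat \<Rightarrow> (nat \<times> nat) set" where
  "bverts V = {0..<V} \<times> {0..<4}"

definition color_edges :: "nat \<Rightarrow> (nat \<Rightarrow> nat) \<Rightarrow> nat \<Rightarrow> (nat \<times> nat) set set" where
  "color_edges V bt c = {{(i,a),(i,b)} | i a b. i < V \<and> {a,b} \<in> bubble_edges (bt i) c}"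

definition wf_graph :: "nat \<Rightarrow> (nat \<Rightarrow> nat) \<Rightarrow> (nat \<times> nat) set set \<Rightarrow> bool" where
  "wf_graph V bt L \<longleftrightarrow>
     (\<forall>i<V. bt i \<in> {0,1,2,3}) \<and>
     (\<forall>l\<in>L. l \<subseteq> bverts V \<and> card l = 2) \<and>
     (\<forall>l1\<in>L. \<forall>l2\<in>L. l1 \<inter> l2 \<noteq> {} \<longrightarrow> l1 = l2)"

text \<open>Bubble vertices carrying an external leg: those not incident to a line.\<close>
definition ext_verts :: "nat \<Rightarrow> (nat \<times> nat) set set \<Rightarrow> (nat \<times> nat) set" where
  "ext_verts V L = bverts V - \<Union>L"

definition N_ext :: "nat \<Rightarrow> (nat \<times> nat) set set \<Rightarrow> nat" where
  "N_ext V L = card (ext_verts V L)"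

text \<open>Connectedness of the colored extension G_col (external legs are pendant
  half-edges and do not affect connectivity).\<close>
definition col_adj :: "nat \<Rightarrow> (nat \<Rightarrow> nat) \<Rightarrow> (nat \<times> nat) set set \<Rightarrow> (nat \<times> nat) \<Rightarrow> (nat \<times> nat) \<Rightarrow> bool" where
  "col_adj V bt L x y \<longleftrightarrow> {x,y} \<in> L \<or> (\<exists>c\<in>colors. {x,y} \<in> color_edges V bt c)"

definition connected_graph :: "nat \<Rightarrow> (nat \<Rightarrow> nat) \<Rightarrow> (nat \<times> nat) set set \<Rightarrow> bool" where
  "connected_graph V bt L \<longleftrightarrow>
     (\<forall>x\<in>bverts V. \<forall>y\<in>bverts V. (col_adj V bt L)\<^sup>*\<^sup>* x y)"

definition face_adj :: "nat \<Rightarrow> (nat \<Rightarrow> nat) \<Rightarrow> (nat \<times> nat) set set \<Rightarrow> nat \<Rightarrow> (nat \<times> nat) \<Rightarrow> (nat \<times> nat) \<Rightarrow> bool" where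
  "face_adj V bt L c x y \<longleftrightarrow> {x,y} \<in> L \<or> {x,y} \<in> color_edges V bt c"

definition faces :: "nat \<Rightarrow> (nat \<Rightarrow> nat) \<Rightarrow> (nat \<times> nat) set set \<Rightarrow> nat \<Rightarrow> (nat \<times> nat) set set" where
  "faces V bt L c = {{y \<in> bverts V. (face_adj V bt L c)\<^sup>*\<^sup>* x y} | x. x \<in> bverts V}"

text \<open>A face is internal (a cycle) iff it contains no external leg, i.e. all of its
  vertices are incident to an internal line; otherwise it is a path between two legs.\<close>
definition internal_faces :: "nat \<Rightarrow> (nat \<Rightarrow> nat) \<Rightarrow> (nat \<times> nat) set set \<Rightarrow> nat \<Rightarrow> (nat \<times> nat) set set" where
  "internal_faces V bt L c = {f \<in> faces V bt L c. f \<inter> ext_verts V L = {}}"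

definition F_int :: "nat \<Rightarrow> (nat \<Rightarrow> nat) \<Rightarrow> (nat \<times> nat) set set \<Rightarrow> nat" where
  "F_int V bt L = (\<Sum>c\<in>colors. card (internal_faces V bt L c))"

definition omega_deg :: "nat \<Rightarrow> (nat \<Rightarrow> nat) \<Rightarrow> (nat \<times> nat) set set \<Rightarrow> real" where
  "omega_deg V bt L = - (real V - 1) + real (F_int V bt L) / 2"

end

theory Submission
  imports Defs
begin


definition comps :: "'a set \<Rightarrow> ('a \<Rightarrow> 'a \<Rightarrow> bool) \<Rightarrow> 'a set set" where
  "comps S R = {{y \<in> S. R\<^sup>*\<^sup>* x y} | x. x \<in> S}"
definition cl :: "'a set \<Rightarrow> ('a \<Rightarrow> 'a \<Rightarrow> bool) \<Rightarrow> 'a \<Rightarrow> 'a set" where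
  "cl S R x = {y \<in> S. R\<^sup>*\<^sup>* x y}"
definition intc :: "'a set \<Rightarrow> ('a \<Rightarrow> 'a \<Rightarrow> bool) \<Rightarrow> 'a set \<Rightarrow> 'a set set" where
  "intc S R E = {f \<in> comps S R. f \<inter> E = {}}"

lemma comps_cl: "comps S R = cl S R ` S"
  unfolding comps_def cl_def by blast

lemma finite_comps: "finite S \<Longrightarrow> finite (comps S R)"
  by (simp add: comps_cl)

lemma finite_intc: "finite S \<Longrightarrow> finite (intc S R E)"
proof -
  have "intc S R E \<subseteq> comps S R" unfolding intc_def by auto
  then show "finite S \<Longrightarrow> finite (intc S R E)" using finite_comps finite_subset by blast
qed

lemma rt_sym:
  assumes sym: "\<And>u v. R u v \<Longrightarrow> R v u" and "R\<^sup>*\<^sup>* x y"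
  shows "R\<^sup>*\<^sup>* y x"
  using assms(2)
proof (induction rule: rtranclp_induct)
  case base then show ?case by simp
next
  case (step y z)
  then show ?case using sym by (meson converse_rtranclp_into_rtranclp)
qed

lemma cl_eq:
  assumes sym: "\<And>u v. R u v \<Longrightarrow> R v u" and "R\<^sup>*\<^sup>* x y"
  shows "cl S R x = cl S R y"
proof -
  have yx: "R\<^sup>*\<^sup>* y x" using rt_sym[OF sym assms(2)] by blast
  show ?thesis unfolding cl_def using assms(2) yx by (auto intro: rtranclp_trans)
qed

locale addedge =
  fixes S :: "'a set" and R R' :: "'a \<Rightarrow> 'a \<Rightarrow> bool" and a b :: 'a
  assumes sym: "\<And>u v. R u v \<Longrightarrow> R v u"
    and R'def: "\<And>u v. R' u v \<longleftrightarrow> R u v \<or> {u,v} = {a,b}"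
    and aS: "a \<in> S" and bS: "b \<in> S"
begin

lemma sym': "R' u v \<Longrightarrow> R' v u"
  using R'def[of u v] R'def[of v u] sym[of u v] by (auto simp: insert_commute)

lemma mono: "R\<^sup>*\<^sup>* u v \<Longrightarrow> R'\<^sup>*\<^sup>* u v"
proof -
  have "R \<le> R'" using R'def by auto
  then show "R\<^sup>*\<^sup>* u v \<Longrightarrow> R'\<^sup>*\<^sup>* u v" using rtranclp_mono by blast
qed

lemma backw: "R'\<^sup>*\<^sup>* w v \<Longrightarrow> R\<^sup>*\<^sup>* w v \<or> R\<^sup>*\<^sup>* w a \<or> R\<^sup>*\<^sup>* w b"
proof (induction rule: rtranclp_induct)
  case base then show ?case by simp
next
  case (step v v')
  show ?case
  proof (cases "R v v'")
    case True then show ?thesis using step by (meson rtranclp.rtrancl_into_rtrancl)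
  next
    case False
    then have "{v,v'} = {a,b}" using step R'def by blast
    then have "v = a \<or> v = b" by (metis doubleton_eq_iff)
    then show ?thesis using step by blast
  qed
qed

lemma ab': "R' a b" using R'def by blast

abbreviation "Z \<equiv> {f \<in> comps S R. a \<notin> f \<and> b \<notin> f}"

lemma Z_sub: "Z \<subseteq> comps S R'"
proof
  fix f assume f: "f \<in> Z"
  then obtain w where w: "w \<in> S" "f = cl S R w" by (auto simp: comps_cl)
  have na: "\<not> R\<^sup>*\<^sup>* w a" "\<not> R\<^sup>*\<^sup>* w b" using f w aS bS by (auto simp: cl_def)
  have "cl S R' w = cl S R w"
    unfolding cl_def using backw mono na by blast
  then show "f \<in> comps S R'" using w by (auto simp: comps_cl)
qed

lemma comps'_sub: "comps S R' \<subseteq> insert (cl S R' a) Z"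
proof
  fix f assume "f \<in> comps S R'"
  then obtain w where w: "w \<in> S" "f = cl S R' w" by (auto simp: comps_cl)
  show "f \<in> insert (cl S R' a) Z"
  proof (cases "R\<^sup>*\<^sup>* w a \<or> R\<^sup>*\<^sup>* w b")
    case True
    then have wa: "R'\<^sup>*\<^sup>* w a" using mono ab' by (meson rtranclp.rtrancl_into_rtrancl sym')
    have "cl S R' w = cl S R' a" using cl_eq[of R' w a S] sym' wa by blast
    then show ?thesis using w by blast
  next
    case False
    have "cl S R' w = cl S R w"
      unfolding cl_def using backw mono False by blast
    then show ?thesis using w False aS bS by (auto simp: comps_cl cl_def)
  qed
qed

lemma comps_sub: "comps S R \<subseteq> insert (cl S R a) (insert (cl S R b) Z)"
proof
  fix f assume "f \<in> comps S R"
  then obtain w where w: "w \<in> S" "f = cl S R w" by (auto simp: comps_cl)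
  show "f \<in> insert (cl S R a) (insert (cl S R b) Z)"
  proof (cases "R\<^sup>*\<^sup>* w a \<or> R\<^sup>*\<^sup>* w b")
    case True
    then have "cl S R w = cl S R a \<or> cl S R w = cl S R b" using cl_eq[of R w _ S] sym by blast
    then show ?thesis using w by blast
  next
    case False
    then show ?thesis using w aS bS by (auto simp: comps_cl cl_def)
  qed
qed

lemma a_in: "a \<in> cl S R' a" using aS by (simp add: cl_def)

lemma cla_notZ: "cl S R' a \<notin> Z" using a_in by blast

lemma cla_in: "cl S R' a \<in> comps S R'" using aS by (auto simp: comps_cl)

lemma G1:
  assumes "finite S"
  shows "card (comps S R) \<le> card (comps S R') + 1"
proof -
  have fZ: "finite Z" using finite_comps[OF assms] by auto
  have "card (comps S R) \<le> card (insert (cl S R a) (insert (cl S R b) Z))"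
    using comps_sub fZ by (intro card_mono) auto
  also have "\<dots> \<le> card Z + 2" using fZ by (simp add: card_insert_if)
  finally have 1: "card (comps S R) \<le> card Z + 2" .
  have "card Z + 1 = card (insert (cl S R' a) Z)" using fZ cla_notZ by simp
  also have "\<dots> \<le> card (comps S R')"
    using Z_sub cla_in finite_comps[OF assms] by (intro card_mono) auto
  finally show ?thesis using 1 by simp
qed

lemma G2:
  assumes "finite S" "R\<^sup>*\<^sup>* a b"
  shows "card (comps S R) \<le> card (comps S R')"
proof -
  have fZ: "finite Z" using finite_comps[OF assms(1)] by auto
  have "cl S R b = cl S R a" using cl_eq[OF sym assms(2)] by simp
  then have "card (comps S R) \<le> card (insert (cl S R a) Z)"
    using comps_sub fZ by (intro card_mono) auto
  also have "\<dots> \<le> card Z + 1" using fZ by (simp add: card_insert_if)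
  also have "card Z + 1 = card (insert (cl S R' a) Z)" using fZ cla_notZ by simp
  also have "\<dots> \<le> card (comps S R')"
    using Z_sub cla_in finite_comps[OF assms(1)] by (intro card_mono) auto
  finally show ?thesis by simp
qed

lemma G3:
  assumes "finite S" "a \<in> E" "b \<in> E"
  shows "card (intc S R E) + (if cl S R' a \<inter> (E - {a,b}) = {} then 1 else 0)
         \<le> card (intc S R' (E - {a,b}))"
proof -
  have sub: "intc S R E \<subseteq> intc S R' (E - {a,b})"
    using Z_sub assms unfolding intc_def by blast
  have nin: "cl S R' a \<notin> intc S R E" using cla_notZ assms unfolding intc_def by blast
  have f: "finite (intc S R' (E - {a,b}))" using finite_intc[OF assms(1)] .
  show ?thesis
  proof (cases "cl S R' a \<inter> (E - {a,b}) = {}")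
    case True
    then have "insert (cl S R' a) (intc S R E) \<subseteq> intc S R' (E - {a,b})"
      using sub cla_in unfolding intc_def by blast
    then have "card (insert (cl S R' a) (intc S R E)) \<le> card (intc S R' (E - {a,b}))"
      using f by (rule card_mono[rotated])
    then show ?thesis using True nin finite_intc[OF assms(1)] by simp
  next
    case False
    then show ?thesis using card_mono[OF f sub] by simp
  qed
qed

lemma G4:
  assumes "finite S"
  shows "card (intc S R' (E - {a,b}))
         \<le> card (intc S R E) + (if cl S R' a \<inter> (E - {a,b}) = {} then 1 else 0)"
proof -
  have f: "finite (intc S R E)" using finite_intc[OF assms(1)] .
  have sub: "intc S R' (E - {a,b}) \<subseteq> insert (cl S R' a) (intc S R E)"
    using comps'_sub unfolding intc_def by blast
  show ?thesis
  proof (cases "cl S R' a \<inter> (E - {a,b}) = {}")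
    case True
    have "card (intc S R' (E - {a,b})) \<le> card (insert (cl S R' a) (intc S R E))"
      using f sub by (intro card_mono) auto
    also have "\<dots> \<le> card (intc S R E) + 1" using f by (simp add: card_insert_if)
    finally show ?thesis using True by simp
  next
    case False
    then have "intc S R' (E - {a,b}) \<subseteq> intc S R E" using sub unfolding intc_def by blast
    then show ?thesis using card_mono[OF f] False by simp
  qed
qed

end

lemma even_inv:
  "finite A \<Longrightarrow> (\<forall>z\<in>A. f z \<in> A \<and> f z \<noteq> z \<and> f (f z) = z) \<Longrightarrow> even (card A)"
proof (induction "card A" arbitrary: A rule: less_induct)
  case less
  show ?case
  proof (cases "A = {}")
    case True then show ?thesis by simp
  next
    case False
    then obtain z where z: "z \<in> A" by blast
    let ?A = "A - {z, f z}"
    have zz: "z \<noteq> f z" "f z \<in> A" using less.prems z by auto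
    have c: "card A = card ?A + 2"
    proof -
      have "card ?A = card A - card {z, f z}"
        using less.prems z zz by (intro card_Diff_subset) auto
      moreover have "card {z, f z} = 2" using zz by simp
      moreover have "card {z, f z} \<le> card A" using less.prems z zz by (intro card_mono) auto
      ultimately show ?thesis by simp
    qed
    have "even (card ?A)"
      apply (rule less.hyps)
      using c apply simp
      using less.prems apply simp
    proof
      fix w assume w: "w \<in> ?A"
      have h: "f w \<in> A" "f w \<noteq> w" "f (f w) = w" "f (f z) = z" using less.prems w z by auto
      have "f w \<noteq> z" using h w by auto
      moreover have "f w \<noteq> f z" proof assume "f w = f z" then have "f (f w) = f (f z)" by simp then show False using h w by auto qed
      ultimately show "f w \<in> ?A \<and> f w \<noteq> w \<and> f (f w) = w" using h by auto
    qed
    then show ?thesis using c by simp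
  qed
qed



definition mate :: "nat \<Rightarrow> nat \<Rightarrow> nat \<Rightarrow> nat" where
  "mate t c a = (if t = 0 then (if c = 1 then [1,0,3,2]!a else if c = 2 then [2,3,0,1]!a else [3,2,1,0]!a)
                 else if c = t then [3,2,1,0]!a else [1,0,3,2]!a)"

lemma four_cases: "(a::nat) < 4 \<Longrightarrow> a = 0 \<or> a = 1 \<or> a = 2 \<or> a = 3" by auto

lemma mate_iff:
  assumes "t \<in> {0,1,2,3}" "c \<in> colors" "a < 4"
  shows "{a,b} \<in> bubble_edges t c \<longleftrightarrow> b = mate t c a"
proof -
  have B: "\<forall>t\<in>{0,1,2,3::nat}. \<forall>c\<in>{1,2,3::nat}. \<forall>a\<in>{0,1,2,3::nat}. \<forall>b. ({a,b} \<in> bubble_edges t c \<longleftrightarrow> b = mate t c a)"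
    by (simp add: bubble_edges_def tet_edges_def mel_edges_def colors_def mate_def doubleton_eq_iff)
  have a': "a \<in> {0,1,2,3}" using assms(3) by auto
  have c': "c \<in> {1,2,3}" using assms(2) unfolding colors_def .
  show ?thesis using spec[OF bspec[OF bspec[OF bspec[OF B assms(1)] c'] a'], of b] .
qed

lemma mate_props:
  assumes "t \<in> {0,1,2,3}" "c \<in> colors" "a < 4"
  shows "mate t c a < 4" "mate t c a \<noteq> a" "mate t c (mate t c a) = a"
proof -
  have B: "\<forall>t\<in>{0,1,2,3::nat}. \<forall>c\<in>{1,2,3::nat}. \<forall>a\<in>{0,1,2,3::nat}. mate t c a < 4 \<and> mate t c a \<noteq> a \<and> mate t c (mate t c a) = a"
    by (simp add: mate_def numeral_eq_Suc)
  have a': "a \<in> {0,1,2,3}" using assms(3) by auto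
  have c': "c \<in> {1,2,3}" using assms(2) unfolding colors_def .
  have "mate t c a < 4 \<and> mate t c a \<noteq> a \<and> mate t c (mate t c a) = a"
    using bspec[OF bspec[OF bspec[OF B assms(1)] c'] a'] .
  then show "mate t c a < 4" "mate t c a \<noteq> a" "mate t c (mate t c a) = a" by auto
qed

lemma be_lt4:
  assumes "{a,b} \<in> bubble_edges t c"
  shows "a < 4 \<and> b < 4"
proof -
  have "\<forall>e \<in> bubble_edges t c. e \<subseteq> {0,1,2,3}"
    by (auto simp: bubble_edges_def tet_edges_def mel_edges_def colors_def)
  then have "a \<in> {0,1,2,3::nat}" "b \<in> {0,1,2,3::nat}" using assms by blast+
  then show ?thesis by auto
qed

definition Mc :: "(nat \<Rightarrow> nat) \<Rightarrow> nat \<Rightarrow> nat \<times> nat \<Rightarrow> nat \<times> nat" where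
  "Mc bt c z = (fst z, mate (bt (fst z)) c (snd z))"

definition types_ok :: "nat \<Rightarrow> (nat \<Rightarrow> nat) \<Rightarrow> bool" where
  "types_ok V bt \<longleftrightarrow> (\<forall>i<V. bt i \<in> {0,1,2,3})"

lemma Mc_props:
  assumes "types_ok V bt" "c \<in> colors" "z \<in> bverts V"
  shows "Mc bt c z \<in> bverts V" "Mc bt c z \<noteq> z" "Mc bt c (Mc bt c z) = z"
    "{z, Mc bt c z} \<in> color_edges V bt c"
proof -
  obtain i a where z: "z = (i,a)" "i < V" "a < 4" using assms(3) by (auto simp: bverts_def)
  have t: "bt i \<in> {0,1,2,3}" using assms(1) z by (auto simp: types_ok_def)
  note mp = mate_props[OF t assms(2) z(3)]
  show "Mc bt c z \<in> bverts V" "Mc bt c z \<noteq> z" "Mc bt c (Mc bt c z) = z"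
    using mp z by (auto simp: Mc_def bverts_def)
  have "{a, mate (bt i) c a} \<in> bubble_edges (bt i) c" using mate_iff[OF t assms(2) z(3)] by simp
  then have "\<exists>i' a' b'. {z, Mc bt c z} = {(i',a'),(i',b')} \<and> i' < V \<and> {a',b'} \<in> bubble_edges (bt i') c"
    apply (rule_tac x=i in exI, rule_tac x=a in exI, rule_tac x="mate (bt i) c a" in exI)
    using z by (simp add: Mc_def)
  then show "{z, Mc bt c z} \<in> color_edges V bt c"
    unfolding color_edges_def by (simp only: mem_Collect_eq)
qed

lemma color_edge_Mc:
  assumes "types_ok V bt" "c \<in> colors" "{z,w} \<in> color_edges V bt c"
  shows "w = Mc bt c z" "z \<in> bverts V"
proof -
  have "\<exists>i a b. {z,w} = {(i,a),(i,b)} \<and> i < V \<and> {a,b} \<in> bubble_edges (bt i) c"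
    using assms(3) unfolding color_edges_def by (simp only: mem_Collect_eq)
  then obtain i a b where e: "{z,w} = {(i,a),(i,b)}" "i < V" "{a,b} \<in> bubble_edges (bt i) c"
    by blast
  have t: "bt i \<in> {0,1,2,3}" using assms(1) e(2) by (auto simp: types_ok_def)
  have ab: "a < 4" "b < 4" using be_lt4[OF e(3)] by auto
  have e2: "{b,a} \<in> bubble_edges (bt i) c" using e(3) by (simp add: insert_commute)
  have m1: "b = mate (bt i) c a" using mate_iff[OF t assms(2) ab(1)] e(3) by simp
  have m2: "a = mate (bt i) c b" using mate_iff[OF t assms(2) ab(2)] e2 by simp
  from e(1) have "(z = (i,a) \<and> w = (i,b)) \<or> (z = (i,b) \<and> w = (i,a))" by (simp add: doubleton_eq_iff)
  then have "w = Mc bt c z \<and> z \<in> bverts V"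
  proof
    assume h: "z = (i,a) \<and> w = (i,b)"
    then show ?thesis using m1 ab e(2) by (simp add: Mc_def bverts_def)
  next
    assume h: "z = (i,b) \<and> w = (i,a)"
    then show ?thesis using m2 ab e(2) by (simp add: Mc_def bverts_def)
  qed
  then show "w = Mc bt c z" "z \<in> bverts V" by auto
qed



lemma wf_types: "wf_graph V bt L \<Longrightarrow> types_ok V bt"
  by (simp add: wf_graph_def types_ok_def)

lemma finite_bverts: "finite (bverts V)" by (simp add: bverts_def)

lemma card_bverts: "card (bverts V) = 4 * V" by (simp add: bverts_def)

lemma wf_finite: "wf_graph V bt L \<Longrightarrow> finite L"
proof -
  assume w: "wf_graph V bt L"
  then have "L \<subseteq> Pow (bverts V)" by (auto simp: wf_graph_def)
  then show "finite L" using finite_bverts by (meson finite_Pow_iff finite_subset)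
qed

lemma wf_line:
  assumes "wf_graph V bt L" "l \<in> L" "z \<in> l"
  shows "\<exists>w. w \<noteq> z \<and> l = {z,w}"
proof -
  have "card l = 2" using assms by (auto simp: wf_graph_def)
  then obtain p q where pq: "l = {p,q}" "p \<noteq> q" by (auto simp: card_2_iff)
  show ?thesis
  proof (cases "z = p")
    case True then show ?thesis using pq by (intro exI[of _ q]) simp
  next
    case False then have "z = q" using pq assms(3) by blast
    then show ?thesis using pq by (intro exI[of _ p]) (simp add: insert_commute)
  qed
qed

lemma wf_line_neq: "wf_graph V bt L \<Longrightarrow> {z,w} \<in> L \<Longrightarrow> z \<noteq> w"
  by (auto simp: wf_graph_def)

lemma wf_uniq:
  assumes "wf_graph V bt L" "{z,w} \<in> L" "{z,w'} \<in> L"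
  shows "w = w'"
proof -
  have "{z,w} = {z,w'}" using assms by (auto simp: wf_graph_def)
  moreover have "z \<noteq> w" "z \<noteq> w'" using wf_line_neq assms by blast+
  ultimately show ?thesis by (metis doubleton_eq_iff)
qed

definition lpart :: "(nat \<times> nat) set set \<Rightarrow> nat \<times> nat \<Rightarrow> nat \<times> nat" where
  "lpart L z = (SOME w. {z,w} \<in> L)"

lemma lpart:
  assumes "wf_graph V bt L" "z \<in> \<Union>L"
  shows "{z, lpart L z} \<in> L" "lpart L z \<noteq> z" "lpart L (lpart L z) = z" "lpart L z \<in> \<Union>L"
proof -
  obtain l where l: "l \<in> L" "z \<in> l" using assms(2) by blast
  then obtain w where "w \<noteq> z" "l = {z,w}" using wf_line[OF assms(1)] by blast
  then have "\<exists>w. {z,w} \<in> L" using l by blast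
  then show zp: "{z, lpart L z} \<in> L" unfolding lpart_def by (rule someI_ex)
  then show "lpart L z \<noteq> z" using wf_line_neq[OF assms(1)] by metis
  have pz: "{lpart L z, z} \<in> L" using zp by (simp add: insert_commute)
  then have "\<exists>w. {lpart L z, w} \<in> L" by blast
  then have "{lpart L z, lpart L (lpart L z)} \<in> L" unfolding lpart_def by (rule someI_ex)
  then show "lpart L (lpart L z) = z" using wf_uniq[OF assms(1) _ pz] by blast
  show "lpart L z \<in> \<Union>L" using zp by blast
qed

lemma fa_sym: "face_adj V bt L c u v \<Longrightarrow> face_adj V bt L c v u"
  unfolding face_adj_def by (simp add: insert_commute)

lemma ca_sym: "col_adj V bt L u v \<Longrightarrow> col_adj V bt L v u"
  unfolding col_adj_def by (simp add: insert_commute)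

lemma fa_ca: "c \<in> colors \<Longrightarrow> face_adj V bt L c u v \<Longrightarrow> col_adj V bt L u v"
  unfolding face_adj_def col_adj_def by blast

lemma fa_ca_rt: "c \<in> colors \<Longrightarrow> (face_adj V bt L c)\<^sup>*\<^sup>* u v \<Longrightarrow> (col_adj V bt L)\<^sup>*\<^sup>* u v"
proof -
  assume c: "c \<in> colors"
  have "face_adj V bt L c \<le> col_adj V bt L" using fa_ca[OF c] by blast
  then show "(face_adj V bt L c)\<^sup>*\<^sup>* u v \<Longrightarrow> (col_adj V bt L)\<^sup>*\<^sup>* u v"
    using rtranclp_mono by blast
qed

lemma lines_sub: "wf_graph V bt L \<Longrightarrow> \<Union>L \<subseteq> bverts V"
  by (auto simp: wf_graph_def)

lemma parity:
  assumes w: "wf_graph V bt L" and c: "c \<in> colors" and x: "x \<in> bverts V"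
  shows "even (card (cl (bverts V) (face_adj V bt L c) x \<inter> ext_verts V L))"
proof -
  let ?R = "face_adj V bt L c"
  let ?A = "cl (bverts V) ?R x"
  let ?E = "ext_verts V L"
  have fA: "finite ?A" using finite_bverts by (simp add: cl_def)
  have t: "types_ok V bt" using wf_types[OF w] .
  have eA: "even (card ?A)"
  proof (rule even_inv[OF fA, of "Mc bt c"], intro ballI)
    fix z assume z: "z \<in> ?A"
    then have zS: "z \<in> bverts V" and xz: "?R\<^sup>*\<^sup>* x z" by (auto simp: cl_def)
    note mp = Mc_props[OF t c zS]
    have "?R z (Mc bt c z)" using mp(4) by (simp add: face_adj_def)
    then have "?R\<^sup>*\<^sup>* x (Mc bt c z)" by (rule rtranclp.rtrancl_into_rtrancl[OF xz])
    then show "Mc bt c z \<in> ?A \<and> Mc bt c z \<noteq> z \<and> Mc bt c (Mc bt c z) = z"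
      using mp by (simp add: cl_def)
  qed
  have fB: "finite (?A - ?E)" using fA by simp
  have eB: "even (card (?A - ?E))"
  proof (rule even_inv[OF fB, of "lpart L"], intro ballI)
    fix z assume z: "z \<in> ?A - ?E"
    then have zS: "z \<in> bverts V" and xz: "?R\<^sup>*\<^sup>* x z" by (auto simp: cl_def)
    have zL: "z \<in> \<Union>L" using z zS by (auto simp: ext_verts_def)
    note lp = lpart[OF w zL]
    have "?R z (lpart L z)" using lp(1) by (simp add: face_adj_def)
    then have "?R\<^sup>*\<^sup>* x (lpart L z)" by (rule rtranclp.rtrancl_into_rtrancl[OF xz])
    moreover have "lpart L z \<in> bverts V" using lp(4) lines_sub[OF w] by blast
    moreover have "lpart L z \<notin> ?E" using lp(4) by (simp add: ext_verts_def)
    ultimately show "lpart L z \<in> ?A - ?E \<and> lpart L z \<noteq> z \<and> lpart L (lpart L z) = z"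
      using lp by (simp add: cl_def)
  qed
  have "card ?A = card (?A \<inter> ?E) + card (?A - ?E)" using card_Int_Diff[OF fA] .
  then show ?thesis using eA eB by presburger
qed

lemma choice:
  assumes w: "wf_graph V bt L" and ne: "L \<noteq> {}"
  shows "\<exists>x y. {x,y} \<in> L \<and> (cl (bverts V) (col_adj V bt L) x \<inter> ext_verts V L = {}
           \<or> (\<exists>c\<in>colors. cl (bverts V) (face_adj V bt L c) x \<inter> ext_verts V L \<noteq> {}))"
proof -
  let ?S = "bverts V" and ?E = "ext_verts V L" and ?C = "col_adj V bt L"
  have t: "types_ok V bt" using wf_types[OF w] .
  obtain l0 where l0: "l0 \<in> L" using ne by blast
  have "card l0 = 2" using w l0 by (auto simp: wf_graph_def)
  then obtain x0 w0 where w0: "l0 = {x0,w0}" unfolding card_2_iff by blast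
  then have x0: "x0 \<in> l0" by simp
  show ?thesis
  proof (cases "cl ?S ?C x0 \<inter> ?E = {}")
    case True then show ?thesis using l0 w0 by blast
  next
    case False
    then obtain e where e: "?C\<^sup>*\<^sup>* x0 e" "e \<in> ?E" by (auto simp: cl_def)
    have "\<exists>z c. z \<in> ?E \<and> c \<in> colors \<and> Mc bt c z \<notin> ?E"
    proof (rule ccontr)
      assume H: "\<not> ?thesis"
      have "?C\<^sup>*\<^sup>* e v \<Longrightarrow> v \<in> ?E" for v
      proof (induction rule: rtranclp_induct)
        case base then show ?case using e by simp
      next
        case (step v v')
        then have vE: "v \<in> ?E" by simp
        then have "{v,v'} \<notin> L" by (auto simp: ext_verts_def)
        then obtain c where c: "c \<in> colors" "{v,v'} \<in> color_edges V bt c"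
          using step(2) by (auto simp: col_adj_def)
        then have "v' = Mc bt c v" using color_edge_Mc[OF t] by blast
        then show ?case using H vE c(1) by blast
      qed
      moreover have "?C\<^sup>*\<^sup>* e x0" using rt_sym[OF ca_sym e(1)] .
      ultimately have "x0 \<in> ?E" by blast
      then show False using x0 l0 by (auto simp: ext_verts_def)
    qed
    then obtain z c where z: "z \<in> ?E" "c \<in> colors" "Mc bt c z \<notin> ?E" by blast
    have zS: "z \<in> ?S" using z(1) by (simp add: ext_verts_def)
    note mp = Mc_props[OF t z(2) zS]
    let ?u = "Mc bt c z"
    have uL: "?u \<in> \<Union>L" using mp(1) z(3) by (simp add: ext_verts_def)
    have "{?u, z} \<in> color_edges V bt c" using mp(4) by (simp add: insert_commute)
    then have "face_adj V bt L c ?u z" by (simp add: face_adj_def)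
    then have "z \<in> cl ?S (face_adj V bt L c) ?u \<inter> ?E" using zS z(1) by (auto simp: cl_def)
    then show ?thesis using lpart(1)[OF w uL] z(2) by blast
  qed
qed

lemma ext_update:
  assumes w: "wf_graph V bt L" and l: "{x,y} \<in> L"
  shows "x \<in> ext_verts V (L - {{x,y}})" "y \<in> ext_verts V (L - {{x,y}})"
    "ext_verts V L = ext_verts V (L - {{x,y}}) - {x,y}"
proof -
  have "\<forall>l\<in>L. l \<subseteq> bverts V" using w by (simp add: wf_graph_def)
  then have "{x,y} \<subseteq> bverts V" using l by (rule bspec)
  then have xyS: "x \<in> bverts V" "y \<in> bverts V" by simp_all
  have disj: "\<forall>l1\<in>L. \<forall>l2\<in>L. l1 \<inter> l2 \<noteq> {} \<longrightarrow> l1 = l2" using w by (simp add: wf_graph_def)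
  have gen: "\<And>(D::(nat\<times>nat) set set) a p. \<forall>l1\<in>D. \<forall>l2\<in>D. l1 \<inter> l2 \<noteq> {} \<longrightarrow> l1 = l2 \<Longrightarrow> a \<in> D \<Longrightarrow> p \<in> a \<Longrightarrow> p \<notin> \<Union>(D - {a})"
    by blast
  have "x \<notin> \<Union>(L - {{x,y}})" "y \<notin> \<Union>(L - {{x,y}})"
    using gen[OF disj l] by simp_all
  then show "x \<in> ext_verts V (L - {{x,y}})" "y \<in> ext_verts V (L - {{x,y}})"
    using xyS by (auto simp: ext_verts_def)
  have "\<Union>L = \<Union>(L - {{x,y}}) \<union> {x,y}" using l by blast
  then show "ext_verts V L = ext_verts V (L - {{x,y}}) - {x,y}" by (auto simp: ext_verts_def)
qed

lemma fa_update:
  assumes l: "{x,y} \<in> L"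
  shows "face_adj V bt L c u v \<longleftrightarrow> face_adj V bt (L - {{x,y}}) c u v \<or> {u,v} = {x,y}"
proof -
  have gen: "\<And>(D::(nat\<times>nat) set set) a s P. a \<in> D \<Longrightarrow> (s \<in> D \<or> P) \<longleftrightarrow> ((s \<in> D - {a} \<or> P) \<or> s = a)"
    by blast
  show ?thesis unfolding face_adj_def using gen[OF l] .
qed

lemma ca_update:
  assumes l: "{x,y} \<in> L"
  shows "col_adj V bt L u v \<longleftrightarrow> col_adj V bt (L - {{x,y}}) u v \<or> {u,v} = {x,y}"
proof -
  have gen: "\<And>(D::(nat\<times>nat) set set) a s P. a \<in> D \<Longrightarrow> (s \<in> D \<or> P) \<longleftrightarrow> ((s \<in> D - {a} \<or> P) \<or> s = a)"
    by blast
  show ?thesis unfolding col_adj_def using gen[OF l] .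
qed

definition Ic :: "nat \<Rightarrow> (nat \<Rightarrow> nat) \<Rightarrow> (nat \<times> nat) set set \<Rightarrow> nat \<Rightarrow> nat" where
  "Ic V bt L c = card (intc (bverts V) (face_adj V bt L c) (ext_verts V L))"
definition Kc :: "nat \<Rightarrow> (nat \<Rightarrow> nat) \<Rightarrow> (nat \<times> nat) set set \<Rightarrow> nat" where
  "Kc V bt L = card (comps (bverts V) (col_adj V bt L))"
definition K0c :: "nat \<Rightarrow> (nat \<Rightarrow> nat) \<Rightarrow> (nat \<times> nat) set set \<Rightarrow> nat" where
  "K0c V bt L = card (intc (bverts V) (col_adj V bt L) (ext_verts V L))"

lemma intc_full: "intc S R S = {}"
  unfolding intc_def comps_def by auto

lemma step_bounds:
  assumes w: "wf_graph V bt L" and l: "{x,y} \<in> L"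
  defines "L' \<equiv> L - {{x,y}}"
  shows "\<And>c. c \<in> colors \<Longrightarrow> Ic V bt L c \<le> Ic V bt L' c
            + (if cl (bverts V) (face_adj V bt L c) x \<inter> ext_verts V L = {} then 1 else 0)"
    "K0c V bt L' + (if cl (bverts V) (col_adj V bt L) x \<inter> ext_verts V L = {} then 1 else 0) \<le> K0c V bt L"
    "Kc V bt L' \<le> Kc V bt L + 1"
    "(col_adj V bt L')\<^sup>*\<^sup>* x y \<Longrightarrow> Kc V bt L' \<le> Kc V bt L"
    "\<And>c. c \<in> colors \<Longrightarrow> \<not> (col_adj V bt L')\<^sup>*\<^sup>* x y \<Longrightarrow>
        cl (bverts V) (face_adj V bt L c) x \<inter> ext_verts V L \<noteq> {}"
proof -
  note eu = ext_update[OF w l, folded L'_def]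
  have xyS: "x \<in> bverts V" "y \<in> bverts V" using eu by (auto simp: ext_verts_def)
  have fS: "finite (bverts V)" by (rule finite_bverts)
  have ae: "\<And>c. addedge (bverts V) (face_adj V bt L' c) (face_adj V bt L c) x y"
    unfolding addedge_def using fa_sym fa_update[OF l, folded L'_def] xyS by blast
  have ac: "addedge (bverts V) (col_adj V bt L') (col_adj V bt L) x y"
    unfolding addedge_def using ca_sym ca_update[OF l, folded L'_def] xyS by blast
  show "Ic V bt L c \<le> Ic V bt L' c
            + (if cl (bverts V) (face_adj V bt L c) x \<inter> ext_verts V L = {} then 1 else 0)" for c
    using addedge.G4[OF ae fS, where E="ext_verts V L'"] unfolding Ic_def eu(3) .
  show "K0c V bt L' + (if cl (bverts V) (col_adj V bt L) x \<inter> ext_verts V L = {} then 1 else 0) \<le> K0c V bt L"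
    using addedge.G3[OF ac fS eu(1) eu(2)] unfolding K0c_def eu(3) .
  show "Kc V bt L' \<le> Kc V bt L + 1" using addedge.G1[OF ac fS] unfolding Kc_def .
  show "(col_adj V bt L')\<^sup>*\<^sup>* x y \<Longrightarrow> Kc V bt L' \<le> Kc V bt L"
    using addedge.G2[OF ac fS] unfolding Kc_def by blast
  show "cl (bverts V) (face_adj V bt L c) x \<inter> ext_verts V L \<noteq> {}"
    if c: "c \<in> colors" and nxy: "\<not> (col_adj V bt L')\<^sup>*\<^sup>* x y" for c
  proof -
    have w': "wf_graph V bt L'" using w unfolding L'_def wf_graph_def by blast
    let ?A = "cl (bverts V) (face_adj V bt L' c) x \<inter> ext_verts V L'"
    have ev: "even (card ?A)" using parity[OF w' c xyS(1)] .
    have xA: "x \<in> ?A" using xyS eu by (simp add: cl_def)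
    have fA: "finite ?A" using fS by (simp add: cl_def)
    have "\<exists>z\<in>?A. z \<noteq> x"
    proof (rule ccontr)
      assume "\<not> ?thesis"
      then have "?A = {x}" using xA by blast
      then show False using ev by simp
    qed
    then obtain z where z: "z \<in> ?A" "z \<noteq> x" by blast
    have rz: "(face_adj V bt L' c)\<^sup>*\<^sup>* x z" and zS: "z \<in> bverts V" using z by (auto simp: cl_def)
    have "z \<noteq> y" using fa_ca_rt[OF c rz] nxy by blast
    then have zE: "z \<in> ext_verts V L" using z eu(3) by auto
    have "(face_adj V bt L c)\<^sup>*\<^sup>* x z" using addedge.mono[OF ae rz] .
    then have "z \<in> cl (bverts V) (face_adj V bt L c) x" using zS by (simp add: cl_def)
    then show ?thesis using zE by blast
  qed
qed

lemma Fs_colors: "(\<Sum>c\<in>colors. f c) = f 1 + f 2 + (f 3 :: nat)"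
  by (simp add: colors_def)

lemma inv:
  "wf_graph V bt L \<Longrightarrow>
   Ic V bt L 1 + Ic V bt L 2 + Ic V bt L 3 + 2 * Kc V bt {} \<le> 2 * (card L + Kc V bt L) + K0c V bt L"
proof (induction "card L" arbitrary: L rule: less_induct)
  case less
  note w = less.prems
  show ?case
  proof (cases "L = {}")
    case True
    then have "Ic V bt L c = 0" for c
      by (simp add: Ic_def ext_verts_def intc_full)
    then show ?thesis using True by simp
  next
    case False
    obtain x y where l: "{x,y} \<in> L" and ch: "cl (bverts V) (col_adj V bt L) x \<inter> ext_verts V L = {}
           \<or> (\<exists>c\<in>colors. cl (bverts V) (face_adj V bt L c) x \<inter> ext_verts V L \<noteq> {})"
      using choice[OF w False] by blast
    define L' where "L' = L - {{x,y}}"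
    have w': "wf_graph V bt L'" using w unfolding L'_def wf_graph_def by blast
    have fL: "finite L" using wf_finite[OF w] .
    have cL: "card L = card L' + 1" using l fL unfolding L'_def
      by (simp add: card_Diff_singleton) (metis Suc_pred card_gt_0_iff empty_iff)
    have IH: "Ic V bt L' 1 + Ic V bt L' 2 + Ic V bt L' 3 + 2 * Kc V bt {} \<le> 2 * (card L' + Kc V bt L') + K0c V bt L'"
      using less.hyps[of L'] cL w' by simp
    note sb = step_bounds[OF w l, folded L'_def]
    have c1: "(1::nat) \<in> colors" "(2::nat) \<in> colors" "(3::nat) \<in> colors" by (simp_all add: colors_def)
    let ?ind = "\<lambda>c. (if cl (bverts V) (face_adj V bt L c) x \<inter> ext_verts V L = {} then 1 else (0::nat))"
    let ?i0 = "(if cl (bverts V) (col_adj V bt L) x \<inter> ext_verts V L = {} then 1 else (0::nat))"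
    have I1: "Ic V bt L 1 \<le> Ic V bt L' 1 + ?ind 1" using sb(1)[OF c1(1)] .
    have I2: "Ic V bt L 2 \<le> Ic V bt L' 2 + ?ind 2" using sb(1)[OF c1(2)] .
    have I3: "Ic V bt L 3 \<le> Ic V bt L' 3 + ?ind 3" using sb(1)[OF c1(3)] .
    have K0: "K0c V bt L' + ?i0 \<le> K0c V bt L" using sb(2) .
    have K0': "K0c V bt L' \<le> K0c V bt L" using K0 by simp
    show ?thesis
    proof (cases "(col_adj V bt L')\<^sup>*\<^sup>* x y")
      case False
      have "?ind c = 0" if "c \<in> colors" for c using sb(5)[OF that False] by simp
      then have "?ind 1 = 0" "?ind 2 = 0" "?ind 3 = 0" using c1 by blast+
      then have "Ic V bt L 1 \<le> Ic V bt L' 1" "Ic V bt L 2 \<le> Ic V bt L' 2" "Ic V bt L 3 \<le> Ic V bt L' 3"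
        using I1 I2 I3 by simp_all
      moreover have "2*(card L' + Kc V bt L') + K0c V bt L' \<le> 2*(card L + Kc V bt L) + K0c V bt L"
        using sb(3) K0' cL by simp
      ultimately show ?thesis using IH by linarith
    next
      case True
      have K: "Kc V bt L' \<le> Kc V bt L" using sb(4)[OF True] .
      have J: "Ic V bt L 1 \<le> Ic V bt L' 1 + 1" "Ic V bt L 2 \<le> Ic V bt L' 2 + 1" "Ic V bt L 3 \<le> Ic V bt L' 3 + 1"
        using I1 I2 I3 by (simp_all split: if_splits)
      from ch show ?thesis
      proof
        assume "cl (bverts V) (col_adj V bt L) x \<inter> ext_verts V L = {}"
        then have "K0c V bt L' + 1 \<le> K0c V bt L" using K0 by simp
        then have "2*(card L' + Kc V bt L') + K0c V bt L' + 3 \<le> 2*(card L + Kc V bt L) + K0c V bt L"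
          using K cL by simp
        then show ?thesis using J IH by linarith
      next
        assume "\<exists>c\<in>colors. cl (bverts V) (face_adj V bt L c) x \<inter> ext_verts V L \<noteq> {}"
        then obtain c where c: "c \<in> colors" "cl (bverts V) (face_adj V bt L c) x \<inter> ext_verts V L \<noteq> {}" by auto
        then have "c = 1 \<or> c = 2 \<or> c = 3" by (simp add: colors_def)
        then have "Ic V bt L 1 + Ic V bt L 2 + Ic V bt L 3 \<le> Ic V bt L' 1 + Ic V bt L' 2 + Ic V bt L' 3 + 2"
        proof (elim disjE)
          assume "c = 1" then have "Ic V bt L 1 \<le> Ic V bt L' 1" using I1 c(2) by simp
          then show ?thesis using J by linarith
        next
          assume "c = 2" then have "Ic V bt L 2 \<le> Ic V bt L' 2" using I2 c(2) by simp
          then show ?thesis using J by linarith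
        next
          assume "c = 3" then have "Ic V bt L 3 \<le> Ic V bt L' 3" using I3 c(2) by simp
          then show ?thesis using J by linarith
        qed
        moreover have "2*(card L' + Kc V bt L') + K0c V bt L' + 2 \<le> 2*(card L + Kc V bt L) + K0c V bt L"
          using K0' K cL by simp
        ultimately show ?thesis using IH by linarith
      qed
    qed
  qed
qed

lemma ca_empty_fst: "col_adj V bt {} u v \<Longrightarrow> fst u = fst v"
proof -
  assume "col_adj V bt {} u v"
  then obtain c where "{u,v} \<in> color_edges V bt c" by (auto simp: col_adj_def)
  then have "\<exists>i a b. {u,v} = {(i,a),(i,b)} \<and> i < V \<and> {a,b} \<in> bubble_edges (bt i) c"
    unfolding color_edges_def by (simp only: mem_Collect_eq)
  then obtain i a b where e: "{u,v} = {(i,a),(i,b)}" by blast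
  then have "(u = (i,a) \<and> v = (i,b)) \<or> (u = (i,b) \<and> v = (i,a))" by (simp add: doubleton_eq_iff)
  then show "fst u = fst v" by auto
qed

lemma Kc_empty: "V \<le> Kc V bt {}"
proof -
  let ?f = "\<lambda>i. cl (bverts V) (col_adj V bt {}) (i,0)"
  have rt: "(col_adj V bt {})\<^sup>*\<^sup>* u v \<Longrightarrow> fst u = fst v" for u v
    by (induction rule: rtranclp_induct) (auto dest: ca_empty_fst)
  have inj: "inj_on ?f {0..<V}"
  proof (rule inj_onI)
    fix i j assume ij: "i \<in> {0..<V}" "j \<in> {0..<V}" "?f i = ?f j"
    have "(j,0) \<in> ?f j" using ij(2) by (simp add: cl_def bverts_def)
    then have "(j,0) \<in> ?f i" using ij(3) by simp
    then have "(col_adj V bt {})\<^sup>*\<^sup>* (i,0) (j,0)" by (simp add: cl_def)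
    then show "i = j" using rt by fastforce
  qed
  have "?f ` {0..<V} \<subseteq> comps (bverts V) (col_adj V bt {})"
    by (auto simp: comps_cl bverts_def)
  then have "card {0..<V} \<le> Kc V bt {}"
    unfolding Kc_def by (rule card_inj_on_le[OF inj _ finite_comps[OF finite_bverts]])
  then show ?thesis by simp
qed

lemma card_lines: "wf_graph V bt L \<Longrightarrow> N_ext V L + 2 * card L = 4 * V"
proof -
  assume w: "wf_graph V bt L"
  have fL: "finite L" using wf_finite[OF w] .
  have pd: "pairwise disjnt L" using w unfolding wf_graph_def pairwise_def disjnt_def by blast
  have fin: "\<And>A. A \<in> L \<Longrightarrow> finite A" using w unfolding wf_graph_def by (meson finite_bverts finite_subset)
  have "card (\<Union>L) = sum card L" using card_Union_disjoint[OF pd fin] .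
  also have "\<dots> = sum (\<lambda>_. 2) L" using w unfolding wf_graph_def by (intro sum.cong) auto
  also have "\<dots> = 2 * card L" by simp
  finally have cU: "card (\<Union>L) = 2 * card L" .
  have sub: "\<Union>L \<subseteq> bverts V" using lines_sub[OF w] .
  have "N_ext V L = card (bverts V) - card (\<Union>L)"
    unfolding N_ext_def ext_verts_def using card_Diff_subset[OF finite_subset[OF sub finite_bverts] sub] .
  moreover have "card (\<Union>L) \<le> card (bverts V)" using card_mono[OF finite_bverts sub] .
  ultimately show ?thesis using cU card_bverts by simp
qed

lemma main_bound:
  assumes w: "wf_graph V bt L" and cn: "connected_graph V bt L" and N: "N_ext V L \<ge> 1"
  shows "F_int V bt L + N_ext V L \<le> 2 * V + 2"
proof -
  let ?S = "bverts V" and ?E = "ext_verts V L"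
  have Ene: "?E \<noteq> {}" using N unfolding N_ext_def by auto
  have ES: "?E \<subseteq> ?S" by (auto simp: ext_verts_def)
  have Sne: "?S \<noteq> {}" using Ene ES by blast
  have clS: "cl ?S (col_adj V bt L) x = ?S" if "x \<in> ?S" for x
    using cn that unfolding connected_graph_def cl_def by blast
  have "comps ?S (col_adj V bt L) = {?S}" unfolding comps_cl using clS Sne by auto
  then have K1: "Kc V bt L = 1" and K0: "K0c V bt L = 0"
    using Ene ES by (auto simp: Kc_def K0c_def intc_def)
  have F: "F_int V bt L = Ic V bt L 1 + Ic V bt L 2 + Ic V bt L 3"
    unfolding F_int_def Fs_colors Ic_def internal_faces_def intc_def faces_def comps_def by simp
  have "F_int V bt L + 2 * Kc V bt {} \<le> 2 * card L + 2"
    using inv[OF w] K1 K0 F by simp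
  then have "F_int V bt L + 2 * V \<le> 2 * card L + 2"
    using Kc_empty[of V bt] by linarith
  then show ?thesis using card_lines[OF w] by linarith
qed

theorem theorem2:
  fixes V :: nat and bt :: "nat \<Rightarrow> nat" and L :: "(nat \<times> nat) set set"
  assumes "wf_graph V bt L"
    and "connected_graph V bt L"
  shows "(N_ext V L \<ge> 6 \<longrightarrow> omega_deg V bt L \<le> - real (N_ext V L) / 12)
       \<and> (N_ext V L = 4 \<longrightarrow> omega_deg V bt L \<le> 0)
       \<and> (N_ext V L = 2 \<longrightarrow> omega_deg V bt L \<le> 1)"
proof -
  let ?F = "real (F_int V bt L)" and ?N = "real (N_ext V L)" and ?V = "real V"
  have H: "?F + ?N \<le> 2 * ?V + 2" if "N_ext V L \<ge> 1"
  proof -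
    have "F_int V bt L + N_ext V L \<le> 2 * V + 2" using main_bound[OF assms that] .
    then have "real (F_int V bt L + N_ext V L) \<le> real (2 * V + 2)" by (simp only: of_nat_le_iff)
    then show ?thesis by simp
  qed
  have om: "omega_deg V bt L = - (?V - 1) + ?F / 2" by (simp add: omega_deg_def)
  have A: "omega_deg V bt L \<le> - ?N / 12" if "N_ext V L \<ge> 6"
  proof -
    have "?N \<ge> 6" using that by simp
    moreover have "?F + ?N \<le> 2 * ?V + 2" using H that by simp
    ultimately show ?thesis unfolding om by linarith
  qed
  have B: "omega_deg V bt L \<le> 0" if "N_ext V L = 4"
  proof -
    have "?N = 4" using that by simp
    moreover have "?F + ?N \<le> 2 * ?V + 2" using H that by simp
    ultimately show ?thesis unfolding om by linarith
  qed
  have C: "omega_deg V bt L \<le> 1" if "N_ext V L = 2"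
  proof -
    have "?N = 2" using that by simp
    moreover have "?F + ?N \<le> 2 * ?V + 2" using H that by simp
    ultimately show ?thesis unfolding om by linarith
  qed
  show ?thesis using A B C by blast
qed

end
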